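(* Let $a$ be a point of $AG(4,3)$ and let $D$ be a cap which is the union of five pairwise disjoint $a$-lines (so $|D|=10$ and $a\notin D$). Then $D$ is a demicap with anchor point $a$ if and only if for every point $b\notin D\cup\{a\}$, the set $D\cup\{b\}$ contains at most one line.
   Context: $AG(4,3)$ is the affine space $\mathbb{F}_3^4$; a line is a set of three distinct points $\{x,y,z\}$ with $x+y+z=0$. A cap is a set of points containing no line. A hyperplane is a $3$-dimensional affine subspace of $\mathbb{F}_3^4$; a set of points is co-hyperplanar if it lies in a common hyperplane. For a point $a$, an $a$-line is a pair of points $\{b,c\}$ such that $\{a,b,c\}$ is a line. A demicap with anchor point $a$ is a cap consisting of the $10$ points of five $a$-lines such that no four of these five $a$-lines are co-hyperplanar (i.e. the $8$ points of any four of them do not lie in a common hyperplane). *)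

theory Defs
  imports "HOL-Analysis.Finite_Cartesian_Product" "HOL-Library.Numeral_Type"
begin

text \<open>Points of AG(4,3) are vectors in F_3^4, modelled as the type 3 ^ 4
  (type 3 is the ring Z/3Z = F_3).\<close>
type_synonym pt = "3 ^ 4"

definition is_line :: "pt set \<Rightarrow> bool" where
  "is_line L \<longleftrightarrow> (\<exists>x y z. L = {x, y, z} \<and> x \<noteq> y \<and> x \<noteq> z \<and> y \<noteq> z \<and> x + y + z = 0)"

definition is_cap :: "pt set \<Rightarrow> bool" where
  "is_cap C \<longleftrightarrow> \<not> (\<exists>L. is_line L \<and> L \<subseteq> C)"

text \<open>A linear subspace of F_3^4 (closed under 0, addition, scalar multiplication).
  Its dimension over F_3 is 3 iff it has 3^3 elements.\<close>
definition is_subspace :: "pt set \<Rightarrow> bool" where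
  "is_subspace V \<longleftrightarrow> 0 \<in> V \<and> (\<forall>x\<in>V. \<forall>y\<in>V. x + y \<in> V) \<and> (\<forall>c::3. \<forall>x\<in>V. c *s x \<in> V)"

definition is_hyperplane :: "pt set \<Rightarrow> bool" where
  "is_hyperplane H \<longleftrightarrow> (\<exists>p V. is_subspace V \<and> card V = 3 ^ 3 \<and> H = (\<lambda>v. p + v) ` V)"

definition cohyperplanar :: "pt set \<Rightarrow> bool" where
  "cohyperplanar S \<longleftrightarrow> (\<exists>H. is_hyperplane H \<and> S \<subseteq> H)"

definition is_aline :: "pt \<Rightarrow> pt set \<Rightarrow> bool" where
  "is_aline a l \<longleftrightarrow> (\<exists>b c. l = {b, c} \<and> is_line {a, b, c})"

definition is_demicap :: "pt \<Rightarrow> pt set \<Rightarrow> bool" where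
  "is_demicap a D \<longleftrightarrow> is_cap D \<and>
     (\<exists>P. card P = 5 \<and> (\<forall>l\<in>P. is_aline a l) \<and> \<Union>P = D \<and>
          (\<forall>Q. Q \<subseteq> P \<and> card Q = 4 \<longrightarrow> \<not> cohyperplanar (\<Union>Q)))"

end

theory Submission
  imports Defs
begin


lemma mod3: "(3::3) = 0" "(4::3) = 1" "(5::3) = 2" "(6::3) = 0" "(7::3) = 1" "(8::3) = 2" "(9::3)=0" "(2::3) = -1"
  by simp_all

lemma ex3: "(c::3) = 0 \<or> c = 1 \<or> c = -1"
proof (cases c)
  case (of_int z)
  then have "z = 0 \<or> z = 1 \<or> z = 2" by auto
  then show ?thesis using of_int by auto
qed

lemma three: "(x::pt) + x + x = 0"
  by (simp add: vec_eq_iff, subst eq_iff_diff_eq_0, simp add: algebra_simps mod3)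

lemma neg2: "- (x + x) = (x::pt)"
  by (simp add: vec_eq_iff, subst eq_iff_diff_eq_0, simp add: algebra_simps mod3)

lemma neg_self: "(u::pt) = - u \<Longrightarrow> u = 0"
  by (metis add.inverse_inverse add_eq_0_iff2 neg2)

lemma neg1: "(-1::3) *s (x::pt) = -x" by (simp add: vector_sneg_minus1)

lemma line_iff: "is_line {x,y,z} \<longleftrightarrow> x\<noteq>y \<and> x\<noteq>z \<and> y\<noteq>z \<and> x+y+z = 0"
proof
  assume "is_line {x,y,z}"
  then obtain p q r where e: "{x,y,z} = {p,q,r}" "p\<noteq>q" "p\<noteq>r" "q\<noteq>r" "p+q+r=0"
    unfolding is_line_def by blast
  have c: "card {x,y,z} = 3" using e by simp
  hence d: "x\<noteq>y \<and> x\<noteq>z \<and> y\<noteq>z" by (auto simp: card_insert_if split: if_splits)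
  have s1: "sum id {x,y,z} = x+y+z" using d by (simp add: add.assoc)
  have s2: "sum id {p,q,r} = p+q+r" using e by (simp add: add.assoc)
  have "x+y+z = p+q+r" using s1 s2 e(1) by metis
  with d e show "x\<noteq>y \<and> x\<noteq>z \<and> y\<noteq>z \<and> x+y+z = 0" by simp
next
  assume "x\<noteq>y \<and> x\<noteq>z \<and> y\<noteq>z \<and> x+y+z = 0"
  then show "is_line {x,y,z}" unfolding is_line_def by blast
qed

lemma aline_iff: "is_aline a l \<longleftrightarrow> (\<exists>u. u \<noteq> 0 \<and> l = {a+u, a-u})"
proof
  assume "is_aline a l"
  then obtain b c where l: "l = {b,c}" "a\<noteq>b" "a\<noteq>c" "b\<noteq>c" "a+b+c = 0"
    unfolding is_aline_def line_iff by blast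
  have "c = a - (b - a)"
  proof -
    have "c = -a - b" using l(5) by (simp add: eq_neg_iff_add_eq_0 algebra_simps)
    also have "\<dots> = a - (b - a)"
      by (simp add: vec_eq_iff, subst eq_iff_diff_eq_0, simp add: algebra_simps mod3)
    finally show ?thesis .
  qed
  then show "\<exists>u. u \<noteq> 0 \<and> l = {a+u, a-u}" using l by (intro exI[of _ "b - a"]) simp
next
  assume "\<exists>u. u \<noteq> 0 \<and> l = {a+u, a-u}"
  then obtain u where u: "u \<noteq> 0" "l = {a+u, a-u}" by blast
  have "a + u \<noteq> a - u"
  proof
    assume "a + u = a - u" then have "u = -u" by simp
    then show False using u neg_self by blast
  qed
  moreover have "a + (a+u) + (a-u) = 0"
    by (simp add: vec_eq_iff, subst eq_iff_diff_eq_0, simp add: algebra_simps mod3)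
  ultimately have "is_line {a, a+u, a-u}" using u by (simp add: line_iff)
  then show "is_aline a l" unfolding is_aline_def using u by blast
qed

lemma aline_eq: "is_aline a l \<Longrightarrow> x \<in> l \<Longrightarrow> l = {x, a - (x - a)}"
proof -
  assume "is_aline a l" "x \<in> l"
  then obtain u where u: "l = {a+u, a-u}" using aline_iff by blast
  show ?thesis
  proof (cases "x = a + u")
    case True then show ?thesis using u by simp
  next
    case False then have "x = a - u" using u \<open>x \<in> l\<close> by blast
    then show ?thesis using u by (simp add: insert_commute)
  qed
qed

lemma aline_sub:
  assumes "\<forall>l\<in>P1. is_aline a l" "\<forall>l\<in>P2. is_aline a l" "\<Union>P1 \<subseteq> \<Union>P2"
  shows "P1 \<subseteq> P2"
proof
  fix l assume l: "l \<in> P1"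
  then obtain u where u: "l = {a+u, a-u}" using assms(1) aline_iff by blast
  then have "a + u \<in> \<Union>P2" using assms(3) l by blast
  then obtain l' where l': "l' \<in> P2" "a + u \<in> l'" by blast
  then have "l' = {a+u, a - (a+u-a)}" using aline_eq assms(2) by blast
  then have "l' = l" using u by simp
  then show "l \<in> P2" using l' by simp
qed




definition dl :: "pt \<Rightarrow> pt \<Rightarrow> bool" where "dl x y \<longleftrightarrow> y \<noteq> x \<and> y \<noteq> -x"

definition good :: "pt set \<Rightarrow> bool" where
  "good U \<longleftrightarrow> 0 \<notin> U \<and> (\<forall>u\<in>U. -u \<in> U) \<and>
     (\<forall>x\<in>U. \<forall>y\<in>U. \<forall>z\<in>U. x\<noteq>y \<and> x\<noteq>z \<and> y\<noteq>z \<longrightarrow> x+y+z \<noteq> 0)"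

definition norel :: "pt set \<Rightarrow> bool" where
  "norel U \<longleftrightarrow> (\<forall>x\<in>U. \<forall>y\<in>U. \<forall>z\<in>U. \<forall>w\<in>U.
     dl x y \<and> dl x z \<and> dl x w \<and> dl y z \<and> dl y w \<and> dl z w \<longrightarrow> x+y+z+w \<noteq> 0)"

lemma sc_cases: "(c::3) \<noteq> 0 \<Longrightarrow> c *s x = x \<or> c *s x = - (x::pt)"
  using ex3[of c] neg1 by auto

lemma sc_in: "good U \<Longrightarrow> c \<noteq> 0 \<Longrightarrow> x \<in> U \<Longrightarrow> c *s x \<in> U"
  using sc_cases[of c x] unfolding good_def by auto

lemma sc_dl: "(c::3) \<noteq> 0 \<Longrightarrow> d \<noteq> 0 \<Longrightarrow> dl x y \<Longrightarrow> dl (c *s x) (d *s y)"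
  using sc_cases[of c x] sc_cases[of d y] unfolding dl_def
  by (metis minus_equation_iff)

lemma dl_ne: "dl x y \<Longrightarrow> x \<noteq> y" "dl x y \<Longrightarrow> x + y \<noteq> 0"
  unfolding dl_def by (auto simp: add_eq_0_iff2)

lemma S1: "good U \<Longrightarrow> c \<noteq> 0 \<Longrightarrow> x \<in> U \<Longrightarrow> c *s x \<noteq> 0"
  using sc_in[of U c x] unfolding good_def by auto

lemma S2: "(c::3) \<noteq> 0 \<Longrightarrow> d \<noteq> 0 \<Longrightarrow> dl x y \<Longrightarrow> c *s x + d *s y \<noteq> 0"
  using sc_dl dl_ne by blast

lemma S3: assumes "good U" "c \<noteq> 0" "d \<noteq> 0" "e \<noteq> 0" "x \<in> U" "y \<in> U" "z \<in> U"
  "dl x y" "dl x z" "dl y z"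
  shows "c *s x + d *s y + e *s z \<noteq> 0"
proof -
  have "c *s x \<in> U" "d *s y \<in> U" "e *s z \<in> U" using assms sc_in by auto
  moreover have "dl (c *s x) (d *s y)" "dl (c *s x) (e *s z)" "dl (d *s y) (e *s z)"
    using assms sc_dl by auto
  ultimately show ?thesis using assms(1) dl_ne(1) unfolding good_def by blast
qed

lemma S4: assumes "norel U" "good U" "c \<noteq> 0" "d \<noteq> 0" "e \<noteq> 0" "f \<noteq> 0"
  "x \<in> U" "y \<in> U" "z \<in> U" "w \<in> U"
  "dl x y" "dl x z" "dl x w" "dl y z" "dl y w" "dl z w"
  shows "c *s x + d *s y + e *s z + f *s w \<noteq> 0"
proof -
  have "c *s x \<in> U" "d *s y \<in> U" "e *s z \<in> U" "f *s w \<in> U" using assms sc_in by auto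
  moreover have "dl (c *s x) (d *s y)" "dl (c *s x) (e *s z)" "dl (d *s y) (e *s z)"
    "dl (c *s x) (f *s w)" "dl (d *s y) (f *s w)" "dl (e *s z) (f *s w)"
    using assms sc_dl by auto
  ultimately show ?thesis using assms(1) unfolding norel_def by blast
qed

lemma comb3: assumes "good U" "x \<in> U" "y \<in> U" "z \<in> U" "dl x y" "dl x z" "dl y z"
  and eq: "c *s x + d *s y + e *s z = 0"
  shows "c = 0 \<and> d = 0 \<and> e = 0"
  using eq S1[OF assms(1) _ assms(2)] S1[OF assms(1) _ assms(3)] S1[OF assms(1) _ assms(4)]
    S2[OF _ _ assms(5)] S2[OF _ _ assms(6)] S2[OF _ _ assms(7)] S3[OF assms(1) _ _ _ assms(2-7)]
  by (cases "c = 0"; cases "d = 0"; cases "e = 0") auto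

lemma comb4: assumes "norel U" "good U" "x \<in> U" "y \<in> U" "z \<in> U" "w \<in> U"
  "dl x y" "dl x z" "dl x w" "dl y z" "dl y w" "dl z w"
  and eq: "c *s x + d *s y + e *s z + f *s w = 0"
  shows "c = 0 \<and> d = 0 \<and> e = 0 \<and> f = 0"
proof -
  note A = assms(2-12)
  note T = S3[OF A(1) _ _ _ A(2,3,4) A(6,7,9)] S3[OF A(1) _ _ _ A(2,3,5) A(6,8,10)]
     S3[OF A(1) _ _ _ A(2,4,5) A(7,8,11)] S3[OF A(1) _ _ _ A(3,4,5) A(9,10,11)]
  show ?thesis
  using eq S1[OF A(1) _ A(2)] S1[OF A(1) _ A(3)] S1[OF A(1) _ A(4)] S1[OF A(1) _ A(5)]
    S2[OF _ _ A(6)] S2[OF _ _ A(7)] S2[OF _ _ A(8)] S2[OF _ _ A(9)] S2[OF _ _ A(10)] S2[OF _ _ A(11)]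
    T S4[OF assms(1,2) _ _ _ _ assms(3-12)]
  by (cases "c = 0"; cases "d = 0"; cases "e = 0"; cases "f = 0") (auto simp: add.assoc)
qed




lemma card27: assumes "good U" "x \<in> U" "y \<in> U" "z \<in> U" "dl x y" "dl x z" "dl y z"
  shows "card (range (\<lambda>(c::3,d::3,e::3). c *s x + d *s y + e *s z)) = 27"
proof -
  have "inj (\<lambda>(c::3,d::3,e::3). c *s x + d *s y + e *s z)"
  proof (rule injI, clarsimp)
    fix c d e c' d' e' :: 3
    assume h: "c *s x + d *s y + e *s z = c' *s x + d' *s y + e' *s z"
    have "(c - c') *s x + (d - d') *s y + (e - e') *s z
        = (c *s x + d *s y + e *s z) - (c' *s x + d' *s y + e' *s z)"
      by (simp add: vector_sub_rdistrib algebra_simps)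
    also have "\<dots> = 0" using h by simp
    finally have "c - c' = 0 \<and> d - d' = 0 \<and> e - e' = 0" using comb3[OF assms] by blast
    then show "c = c' \<and> d = d' \<and> e = e'" by simp
  qed
  then have "card (range (\<lambda>(c::3,d::3,e::3). c *s x + d *s y + e *s z)) = CARD(3\<times>3\<times>3)"
    by (simp add: card_image)
  then show ?thesis by simp
qed

lemma card81: assumes "norel U" "good U" "x \<in> U" "y \<in> U" "z \<in> U" "w \<in> U"
  "dl x y" "dl x z" "dl x w" "dl y z" "dl y w" "dl z w"
  shows "card (range (\<lambda>(c::3,d::3,e::3,f::3). c *s x + d *s y + e *s z + f *s w)) = 81"
proof -
  have "inj (\<lambda>(c::3,d::3,e::3,f::3). c *s x + d *s y + e *s z + f *s w)"
  proof (rule injI, clarsimp)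
    fix c d e f c' d' e' f' :: 3
    assume h: "c *s x + d *s y + e *s z + f *s w = c' *s x + d' *s y + e' *s z + f' *s w"
    have "(c - c') *s x + (d - d') *s y + (e - e') *s z + (f - f') *s w
        = (c *s x + d *s y + e *s z + f *s w) - (c' *s x + d' *s y + e' *s z + f' *s w)"
      by (simp add: vector_sub_rdistrib algebra_simps)
    also have "\<dots> = 0" using h by simp
    finally have "c - c' = 0 \<and> d - d' = 0 \<and> e - e' = 0 \<and> f - f' = 0" using comb4[OF assms] by blast
    then show "c = c' \<and> d = d' \<and> e = e' \<and> f = f'" by simp
  qed
  then have "card (range (\<lambda>(c::3,d::3,e::3,f::3). c *s x + d *s y + e *s z + f *s w)) = CARD(3\<times>3\<times>3\<times>3)"
    by (simp add: card_image)
  then show ?thesis by simp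
qed

lemma span3_subspace: "is_subspace (range (\<lambda>(c::3,d::3,e::3). c *s x + d *s y + e *s (z::pt)))"
  unfolding is_subspace_def
proof (intro conjI ballI allI)
  show "0 \<in> range (\<lambda>(c::3,d::3,e::3). c *s x + d *s y + e *s z)"
    by (rule range_eqI[of _ _ "(0,0,0)"]) simp
next
  fix u v assume "u \<in> range (\<lambda>(c::3,d::3,e::3). c *s x + d *s y + e *s z)"
    "v \<in> range (\<lambda>(c::3,d::3,e::3). c *s x + d *s y + e *s z)"
  then obtain c d e c' d' e' where "u = c *s x + d *s y + e *s z" "v = c' *s x + d' *s y + e' *s z"
    by auto
  then have "u + v = (c+c') *s x + (d+d') *s y + (e+e') *s z"
    by (simp add: vector_sadd_rdistrib algebra_simps)
  then show "u + v \<in> range (\<lambda>(c::3,d::3,e::3). c *s x + d *s y + e *s z)"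
    by (intro range_eqI[of _ _ "(c+c',d+d',e+e')"]) simp
next
  fix k :: 3 and u assume "u \<in> range (\<lambda>(c::3,d::3,e::3). c *s x + d *s y + e *s z)"
  then obtain c d e where "u = c *s x + d *s y + e *s z" by auto
  then have "k *s u = (k*c) *s x + (k*d) *s y + (k*e) *s z"
    by (simp add: vector_add_ldistrib vector_smult_assoc)
  then show "k *s u \<in> range (\<lambda>(c::3,d::3,e::3). c *s x + d *s y + e *s z)"
    by (intro range_eqI[of _ _ "(k*c,k*d,k*e)"]) simp
qed

lemma subspace_comb: assumes "is_subspace V" "x \<in> V" "y \<in> V" "z \<in> V" "w \<in> V"
  shows "c *s x + d *s y + e *s z + f *s w \<in> V"
  using assms unfolding is_subspace_def by metis




lemma dbl0: "z + z = 0 \<Longrightarrow> (z::pt) = 0"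
  by (metis add.left_neutral three)
lemma L1: "-(x+y) = (x::pt) \<Longrightarrow> y = x"
  by (metis minus_add_cancel neg2)
lemma M1: "y = -(x+y+x) \<Longrightarrow> x + y = (0::pt)"
  using dbl0 by auto
lemma M2: "x = x+y+x \<Longrightarrow> x + y = (0::pt)"
  by simp
lemma M3: "y + -x + -(x+y+x) = (0::pt)"
  by (simp add: vec_eq_iff, subst eq_iff_diff_eq_0, simp add: algebra_simps mod3)

lemma K: assumes g: "good U" and U: "x \<in> U" "y \<in> U" "z \<in> U" "w \<in> U"
  and s: "x + y = z + w" and nz: "x + y \<noteq> 0" and ne: "{x,y} \<noteq> {z,w}"
  shows "z \<noteq> x \<and> z \<noteq> -x"
proof
  show "z \<noteq> x"
  proof
    assume "z = x" then have "w = y" using s by simp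
    then show False using ne \<open>z = x\<close> by simp
  qed
next
  show "z \<noteq> -x"
  proof
    assume zx: "z = -x"
    then have w: "w = x + y + x" using s by (metis add.commute add_minus_cancel)
    have u1: "-x \<in> U" "-w \<in> U" using g U unfolding good_def by auto
    have n1: "y \<noteq> -x" using nz by (metis add.commute add.right_inverse)
    have n2: "y \<noteq> -w"
    proof
      assume "y = -w" then have "y = -(x+y+x)" using w by simp
      then show False using M1 nz by blast
    qed
    have n3: "-x \<noteq> -w"
    proof
      assume "-x = -w" then have "x = x+y+x" using w by simp
      then show False using M2 nz by blast
    qed
    have s0: "y + -x + -w = 0" using M3[of y x] w by simp
    have "\<forall>x\<in>U. \<forall>y\<in>U. \<forall>z\<in>U. x\<noteq>y \<and> x\<noteq>z \<and> y\<noteq>z \<longrightarrow> x+y+z \<noteq> 0"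
      using g unfolding good_def by blast
    then have "y\<noteq>-x \<and> y\<noteq>-w \<and> -x\<noteq>-w \<longrightarrow> y + -x + -w \<noteq> 0" using U(2) u1 by blast
    then show False using n1 n2 n3 s0 by blast
  qed
qed

lemma lines_through:
  assumes cap: "is_cap D" and b: "b \<notin> D" and L: "is_line L" "L \<subseteq> insert b D"
  shows "\<exists>x y. a+x \<in> D \<and> a+y \<in> D \<and> x \<noteq> y \<and> (b-a)+x+y = 0 \<and> L = {b, a+x, a+y}"
proof -
  obtain p q r where e: "L = {p,q,r}" "p\<noteq>q" "p\<noteq>r" "q\<noteq>r" "p+q+r=0"
    using L(1) unfolding is_line_def by metis
  have "b \<in> L"
  proof (rule ccontr)
    assume "b \<notin> L" then have "L \<subseteq> D" using L(2) by blast
    with cap L(1) show False unfolding is_cap_def by blast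
  qed
  have "\<exists>q' r'. L = {b,q',r'} \<and> b\<noteq>q' \<and> b\<noteq>r' \<and> q'\<noteq>r' \<and> b+q'+r'=0"
  proof -
    consider "b=p" | "b=q" | "b=r" using \<open>b\<in>L\<close> e by blast
    then show ?thesis
    proof cases
      case 1 then show ?thesis using e by blast
    next
      case 2
      have "L = {b,p,r}" using e(1) 2 by auto
      moreover have "b+p+r = 0" using e(5) 2 by (metis add.commute)
      ultimately show ?thesis using e 2 by blast
    next
      case 3
      have "L = {b,p,q}" using e(1) 3 by auto
      moreover have "b+p+q = 0" using e(5) 3 by (metis add.commute add.left_commute)
      ultimately show ?thesis using e 3 by blast
    qed
  qed
  then obtain q' r' where f: "L = {b,q',r'}" "b\<noteq>q'" "b\<noteq>r'" "q'\<noteq>r'" "b+q'+r'=0" by blast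
  have D: "q' \<in> D" "r' \<in> D" using f L(2) by auto
  have "(b-a)+(q'-a)+(r'-a) = (b+q'+r') - (a+a+a)" by (simp add: algebra_simps)
  also have "\<dots> = 0" using f(5) three by simp
  finally show ?thesis using D f by (intro exI[of _ "q'-a"] exI[of _ "r'-a"]) auto
qed

context
  fixes a :: pt and P :: "pt set set" and D :: "pt set"
  assumes Pal: "\<forall>l\<in>P. is_aline a l" and Pdis: "pairwise disjnt P"
    and DP: "D = \<Union>P" and cap: "is_cap D"
begin

abbreviation "U \<equiv> {u. a + u \<in> D}"

lemma aD: "a \<notin> D"
proof
  assume "a \<in> D"
  then obtain l where l: "l \<in> P" "a \<in> l" using DP by blast
  then obtain u where "u \<noteq> 0" "l = {a+u, a-u}" using Pal aline_iff by blast
  then show False using l by auto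
qed

lemma lineP: "u \<in> U \<Longrightarrow> {a+u, a-u} \<in> P"
proof -
  assume "u \<in> U"
  then obtain l where l: "l \<in> P" "a + u \<in> l" using DP by blast
  then have "l = {a+u, a - (a+u-a)}" using aline_eq Pal by blast
  then show ?thesis using l by simp
qed

lemma goodU: "good U"
  unfolding good_def
proof (intro conjI ballI impI)
  show "0 \<notin> U" using aD by simp
next
  fix u assume "u \<in> U"
  then have "a - u \<in> D" using lineP DP by blast
  then show "-u \<in> U" by simp
next
  fix x y z assume h: "x \<in> U" "y \<in> U" "z \<in> U" "x \<noteq> y \<and> x \<noteq> z \<and> y \<noteq> z"
  show "x + y + z \<noteq> 0"
  proof
    assume s: "x + y + z = 0"
    have "(a+x)+(a+y)+(a+z) = (x+y+z) + (a+a+a)" by (simp add: algebra_simps)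
    also have "\<dots> = 0" using s three by simp
    finally have "is_line {a+x, a+y, a+z}" using h by (simp add: line_iff)
    moreover have "{a+x, a+y, a+z} \<subseteq> D" using h by simp
    ultimately show False using cap unfolding is_cap_def by blast
  qed
qed

end



context
  fixes a :: pt and P :: "pt set set" and D :: "pt set"
  assumes Pal: "\<forall>l\<in>P. is_aline a l" and Pdis: "pairwise disjnt P"
    and DP: "D = \<Union>P" and cap: "is_cap D"
begin

abbreviation "UU \<equiv> {u. a + u \<in> D}"

lemmas aD' = aD[OF Pal Pdis DP cap]
lemmas lineP' = lineP[OF Pal Pdis DP cap]
lemmas goodU' = goodU[OF Pal Pdis DP cap]

lemma Gtrip: "x \<in> UU \<Longrightarrow> y \<in> UU \<Longrightarrow> z \<in> UU \<Longrightarrow> x\<noteq>y \<Longrightarrow> x\<noteq>z \<Longrightarrow> y\<noteq>z \<Longrightarrow> x+y+z \<noteq> 0"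
  using goodU' unfolding good_def by blast

lemma negU: "x \<in> UU \<Longrightarrow> -x \<in> UU"
  using goodU' unfolding good_def by blast

lemma partA: "(\<forall>b. b \<notin> D \<and> b \<noteq> a \<longrightarrow> card {L. is_line L \<and> L \<subseteq> insert b D} \<le> 1) \<longleftrightarrow> norel UU"
proof
  assume R: "\<forall>b. b \<notin> D \<and> b \<noteq> a \<longrightarrow> card {L. is_line L \<and> L \<subseteq> insert b D} \<le> 1"
  show "norel UU" unfolding norel_def
  proof (intro ballI impI notI)
    fix x y z w assume U: "x \<in> UU" "y \<in> UU" "z \<in> UU" "w \<in> UU"
      and dls: "dl x y \<and> dl x z \<and> dl x w \<and> dl y z \<and> dl y w \<and> dl z w"
      and s: "x + y + z + w = 0"
    have "(x+y)+(z+w) = 0" using s by (simp add: add.assoc)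
    then have xy: "-(x+y) = z + w" by (rule minus_unique)
    define b where "b = a + (z + w)"
    have b2: "b = a - (x+y)" using xy b_def by (metis diff_conv_add_uminus)
    have bx: "-(x+y) \<noteq> x" using L1[of x y] dls unfolding dl_def by blast
    have by': "-(x+y) \<noteq> y"
    proof
      assume "-(x+y) = y" then have "-(y+x) = y" by (simp add: add.commute)
      then have "x = y" by (rule L1)
      then show False using dls unfolding dl_def by blast
    qed
    have bnD: "b \<notin> D"
    proof
      assume "b \<in> D"
      then have "-(x+y) \<in> UU" using b2 by (metis diff_conv_add_uminus mem_Collect_eq)
      moreover have "x \<noteq> y" using dls unfolding dl_def by blast
      ultimately have "-(x+y) + x + y \<noteq> 0" using Gtrip U bx by' by blast
      moreover have "-(x+y) + x + y = 0" by (simp add: add.assoc)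
      ultimately show False by blast
    qed
    have ba: "b \<noteq> a" using b_def dl_ne(2)[of z w] dls by simp
    have l1: "is_line {b, a+x, a+y}"
    proof -
      have "b \<noteq> a + x" using bx b2 by (metis add_left_cancel diff_conv_add_uminus)
      moreover have "b \<noteq> a + y" using by' b2 by (metis add_left_cancel diff_conv_add_uminus)
      moreover have "a + x \<noteq> a + y" using dls unfolding dl_def by auto
      moreover have "b + (a+x) + (a+y) = a+a+a" using b2 by (simp add: algebra_simps)
      ultimately show ?thesis using three by (simp add: line_iff)
    qed
    have zw1: "-(z+w) \<noteq> z" using L1[of z w] dls unfolding dl_def by blast
    have zw2: "-(z+w) \<noteq> w"
    proof
      assume "-(z+w) = w" then have "-(w+z) = w" by (simp add: add.commute)
      then have "z = w" by (rule L1)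
      then show False using dls unfolding dl_def by blast
    qed
    have l2: "is_line {b, a-z, a-w}"
    proof -
      have "b \<noteq> a - z"
      proof
        assume "b = a - z" then have "z + w = -z" using b_def by (metis add_left_cancel diff_conv_add_uminus)
        then show False using zw1 by (metis minus_minus)
      qed
      moreover have "b \<noteq> a - w"
      proof
        assume "b = a - w" then have "z + w = -w" using b_def by (metis add_left_cancel diff_conv_add_uminus)
        then show False using zw2 by (metis minus_minus)
      qed
      moreover have "a - z \<noteq> a - w" using dls unfolding dl_def by auto
      moreover have "b + (a-z) + (a-w) = a+a+a" using b_def by (simp add: algebra_simps)
      ultimately show ?thesis using three by (simp add: line_iff)
    qed
    have s1: "{b, a+x, a+y} \<subseteq> insert b D" using U by simp
    have s2: "{b, a-z, a-w} \<subseteq> insert b D" using negU[OF U(3)] negU[OF U(4)] by simp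
    have ne: "{b, a+x, a+y} \<noteq> {b, a-z, a-w}"
    proof
      assume "{b, a+x, a+y} = {b, a-z, a-w}"
      then have "a + x \<in> {b, a-z, a-w}" by blast
      moreover have "a + x \<noteq> b" using bx b2 by (metis add_left_cancel diff_conv_add_uminus)
      moreover have "a + x \<noteq> a - z" using dls unfolding dl_def by (metis add_left_cancel diff_conv_add_uminus minus_minus)
      moreover have "a + x \<noteq> a - w" using dls unfolding dl_def by (metis add_left_cancel diff_conv_add_uminus minus_minus)
      ultimately show False by blast
    qed
    have c: "card {L. is_line L \<and> L \<subseteq> insert b D} \<le> 1" using R bnD ba by blast
    have fin: "finite {L. is_line L \<and> L \<subseteq> insert b D}" by simp
    show False using c card_le_Suc0_iff_eq[OF fin] l1 l2 s1 s2 ne by auto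
  qed
next
  assume N: "norel UU"
  show "\<forall>b. b \<notin> D \<and> b \<noteq> a \<longrightarrow> card {L. is_line L \<and> L \<subseteq> insert b D} \<le> 1"
  proof (intro allI impI)
    fix b assume b: "b \<notin> D \<and> b \<noteq> a"
    have fin: "finite {L. is_line L \<and> L \<subseteq> insert b D}" by simp
    have "\<forall>L1\<in>{L. is_line L \<and> L \<subseteq> insert b D}. \<forall>L2\<in>{L. is_line L \<and> L \<subseteq> insert b D}. L1 = L2"
    proof (intro ballI, rule ccontr)
      fix L1 L2 assume L1: "L1 \<in> {L. is_line L \<and> L \<subseteq> insert b D}"
        and L2: "L2 \<in> {L. is_line L \<and> L \<subseteq> insert b D}" and ne: "L1 \<noteq> L2"
      obtain x y where xy: "a+x \<in> D" "a+y \<in> D" "x \<noteq> y" "(b-a)+x+y = 0" "L1 = {b,a+x,a+y}"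
        using lines_through[OF cap, of b L1 a] b L1 by blast
      obtain z w where zw: "a+z \<in> D" "a+w \<in> D" "z \<noteq> w" "(b-a)+z+w = 0" "L2 = {b,a+z,a+w}"
        using lines_through[OF cap, of b L2 a] b L2 by blast
      have U: "x \<in> UU" "y \<in> UU" "z \<in> UU" "w \<in> UU" using xy zw by auto
      have e1: "x + y = -(b-a)" using xy(4) by (metis add.assoc add.commute eq_neg_iff_add_eq_0)
      have e2: "z + w = -(b-a)" using zw(4) by (metis add.assoc add.commute eq_neg_iff_add_eq_0)
      have nz: "x + y \<noteq> 0" using e1 b by auto
      have nz': "z + w \<noteq> 0" using e2 b by auto
      have s: "x + y = z + w" using e1 e2 by simp
      have sne: "{x,y} \<noteq> {z,w}"
      proof
        assume "{x,y} = {z,w}"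
        then have "(x=z \<and> y=w) \<or> (x=w \<and> y=z)" by (simp add: doubleton_eq_iff)
        then have "L1 = L2" using xy(5) zw(5) by (elim disjE) (simp_all add: insert_commute)
        then show False using ne by blast
      qed
      have k1: "z \<noteq> x \<and> z \<noteq> -x" using K[OF goodU' U s nz sne] .
      have s2: "y + x = z + w" "x + y = w + z" "y + x = w + z" using s by (simp_all add: add.commute)
      have nz2: "y + x \<noteq> 0" using nz by (simp add: add.commute)
      have sne2: "{y,x} \<noteq> {z,w}" "{x,y} \<noteq> {w,z}" "{y,x} \<noteq> {w,z}" using sne by (simp_all add: insert_commute)
      have k2: "z \<noteq> y \<and> z \<noteq> -y" using K[OF goodU' U(2) U(1) U(3) U(4) s2(1) nz2 sne2(1)] .
      have k3: "w \<noteq> x \<and> w \<noteq> -x" using K[OF goodU' U(1) U(2) U(4) U(3) s2(2) nz sne2(2)] .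
      have k4: "w \<noteq> y \<and> w \<noteq> -y" using K[OF goodU' U(2) U(1) U(4) U(3) s2(3) nz2 sne2(3)] .
      have d1: "dl x y" unfolding dl_def using xy(3) nz by (metis add.right_inverse)
      have d2: "dl (-z) (-w)" unfolding dl_def using zw(3) nz' by (metis add.right_inverse minus_minus neg_equal_iff_equal)
      have d3: "dl x (-z)" "dl x (-w)" "dl y (-z)" "dl y (-w)" unfolding dl_def using k1 k2 k3 k4
        by (metis minus_minus neg_equal_iff_equal)+
      have "x + y + -z + -w = 0" using s by (simp add: algebra_simps)
      moreover have "-z \<in> UU" "-w \<in> UU" using negU U by auto
      moreover note N[unfolded norel_def, rule_format, of x y "-z" "-w"]
      ultimately show False using U d1 d2 d3 by blast
    qed
    then show "card {L. is_line L \<and> L \<subseteq> insert b D} \<le> 1"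
      using card_le_Suc0_iff_eq[OF fin] by simp
  qed
qed

end



lemma dl_of_disj: "disjnt {a+u, a-u} {a+v, a-(v::pt)} \<Longrightarrow> dl u v"
  unfolding dl_def disjnt_def by auto

lemma dl_ne_line: "dl u v \<Longrightarrow> {a+u, a-u} \<noteq> {a+v, a-(v::pt)}"
  unfolding dl_def by (auto simp: doubleton_eq_iff)

lemma recov: "(v1::pt) = a + u - p \<Longrightarrow> v2 = a-u-p \<Longrightarrow> u = 2 *s (v1 + 2 *s v2)"
  by (simp add: vec_eq_iff, subst eq_iff_diff_eq_0, simp add: algebra_simps mod3)

context
  fixes a :: pt and P :: "pt set set" and D :: "pt set"
  assumes Pal: "\<forall>l\<in>P. is_aline a l" and Pdis: "pairwise disjnt P"
    and DP: "D = \<Union>P" and cap: "is_cap D"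
begin

abbreviation "UV \<equiv> {u. a + u \<in> D}"

lemmas lineP'' = lineP[OF Pal Pdis DP cap]
lemmas goodU'' = goodU[OF Pal Pdis DP cap]

lemma partB: "(\<forall>Q. Q \<subseteq> P \<and> card Q = 4 \<longrightarrow> \<not> cohyperplanar (\<Union>Q)) \<longleftrightarrow> norel UV"
proof
  assume H: "\<forall>Q. Q \<subseteq> P \<and> card Q = 4 \<longrightarrow> \<not> cohyperplanar (\<Union>Q)"
  show "norel UV" unfolding norel_def
  proof (intro ballI impI notI)
    fix x y z w assume U: "x \<in> UV" "y \<in> UV" "z \<in> UV" "w \<in> UV"
      and dls: "dl x y \<and> dl x z \<and> dl x w \<and> dl y z \<and> dl y w \<and> dl z w"
      and s: "x + y + z + w = 0"
    define Q where "Q = {{a+x,a-x},{a+y,a-y},{a+z,a-z},{a+w,a-w}}"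
    have QP: "Q \<subseteq> P" unfolding Q_def using lineP'' U by auto
    have n: "{a+x,a-x} \<noteq> {a+y,a-y}" "{a+x,a-x} \<noteq> {a+z,a-z}" "{a+x,a-x} \<noteq> {a+w,a-w}"
      "{a+y,a-y} \<noteq> {a+z,a-z}" "{a+y,a-y} \<noteq> {a+w,a-w}" "{a+z,a-z} \<noteq> {a+w,a-w}"
      using dl_ne_line[of x y a] dl_ne_line[of x z a] dl_ne_line[of x w a] dl_ne_line[of y z a]
        dl_ne_line[of y w a] dl_ne_line[of z w a] dls by simp_all
    have cQ: "card Q = 4" unfolding Q_def using n by simp
    define V where "V = range (\<lambda>(c::3,d::3,e::3). c *s x + d *s y + e *s z)"
    have inV: "\<And>c d e. c *s x + d *s y + e *s z \<in> V"
    proof -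
      fix c d e :: 3
      show "c *s x + d *s y + e *s z \<in> V" unfolding V_def
        by (rule range_eqI[of _ _ "(c,d,e)"]) simp
    qed
    have sub: "is_subspace V" unfolding V_def by (rule span3_subspace)
    have c27: "card V = 27" unfolding V_def
      using card27[OF goodU'' U(1-3)] dls by blast
    define Hh where "Hh = (\<lambda>v. a + v) ` V"
    have hyp: "is_hyperplane Hh" unfolding is_hyperplane_def Hh_def using sub c27 by auto
    have w: "w = -(x+y+z)" using s by (metis add.commute eq_neg_iff_add_eq_0)
    have v1: "x \<in> V" using inV[of 1 0 0] by simp
    have v2: "y \<in> V" using inV[of 0 1 0] by simp
    have v3: "z \<in> V" using inV[of 0 0 1] by simp
    have v4: "-x \<in> V" using inV[of "-1" 0 0] by (simp add: neg1)
    have v5: "-y \<in> V" using inV[of 0 "-1" 0] by (simp add: neg1)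
    have v6: "-z \<in> V" using inV[of 0 0 "-1"] by (simp add: neg1)
    have e1: "(1::3) *s x + (1::3) *s y + (1::3) *s z = -w" by (subst w) simp
    have v7: "-w \<in> V" by (metis e1 inV)
    have e2: "(-1::3) *s x + (-1::3) *s y + (-1::3) *s z = w" unfolding neg1 w by (simp add: algebra_simps)
    have v8: "w \<in> V" by (metis e2 inV)
    have pl: "\<And>u. u \<in> V \<Longrightarrow> a + u \<in> Hh" unfolding Hh_def by blast
    have mi: "\<And>u. -u \<in> V \<Longrightarrow> a - u \<in> Hh"
    proof -
      fix u assume "-u \<in> V"
      then have "a + -u \<in> Hh" unfolding Hh_def by blast
      then show "a - u \<in> Hh" by simp
    qed
    have "\<Union>Q \<subseteq> Hh" unfolding Q_def
      using pl[OF v1] pl[OF v2] pl[OF v3] pl[OF v8] mi[OF v4] mi[OF v5] mi[OF v6] mi[OF v7]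
      by (simp only: Union_insert Union_empty Un_subset_iff insert_subset empty_subsetI Un_empty_right simp_thms)
    then have "cohyperplanar (\<Union>Q)" unfolding cohyperplanar_def using hyp by blast
    then show False using H QP cQ by blast
  qed
next
  assume N: "norel UV"
  show "\<forall>Q. Q \<subseteq> P \<and> card Q = 4 \<longrightarrow> \<not> cohyperplanar (\<Union>Q)"
  proof (intro allI impI notI)
    fix Q assume Q: "Q \<subseteq> P \<and> card Q = 4" and ch: "cohyperplanar (\<Union>Q)"
    obtain Hh where Hh: "is_hyperplane Hh" "\<Union>Q \<subseteq> Hh" using ch unfolding cohyperplanar_def by blast
    obtain p V where pV: "is_subspace V" "card V = 27" "Hh = (\<lambda>v. p + v) ` V"
      using Hh(1) unfolding is_hyperplane_def by auto
    have key: "\<And>l. l \<in> Q \<Longrightarrow> \<exists>u. u \<in> UV \<and> u \<in> V \<and> l = {a+u, a-u}"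
    proof -
      fix l assume lQ: "l \<in> Q"
      then have lP: "l \<in> P" using Q by blast
      then obtain u where u: "u \<noteq> 0" "l = {a+u, a-u}" using Pal aline_iff by blast
      have "a + u \<in> D" using lP u DP by blast
      moreover have "a + u \<in> Hh" "a - u \<in> Hh" using lQ u Hh(2) by auto
      then obtain v1 v2 where vv: "v1 \<in> V" "v2 \<in> V" "a + u = p + v1" "a - u = p + v2"
        using pV(3) by auto
      have "u = 2 *s (v1 + 2 *s v2)"
        by (rule recov) (use vv in \<open>simp_all add: algebra_simps\<close>)
      moreover have "2 *s (v1 + 2 *s v2) \<in> V" using pV(1) vv unfolding is_subspace_def by blast
      ultimately show "\<exists>u. u \<in> UV \<and> u \<in> V \<and> l = {a+u, a-u}" using u \<open>a+u \<in> D\<close> by auto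
    qed
    have "card Q = Suc 3" using Q by simp
    then have "\<exists>b B. Q = insert b B \<and> b \<notin> B \<and> card B = 3 \<and> ((3::nat) = 0 \<longrightarrow> B = {})"
      by (rule card_eq_SucD)
    then obtain l1 Q' where Q1': "Q = insert l1 Q' \<and> l1 \<notin> Q' \<and> card Q' = 3" by blast
    then have Q1: "Q = insert l1 Q'" "l1 \<notin> Q'" "card Q' = 3" by simp_all
    then obtain l2 l3 l4 where Q2: "Q' = {l2,l3,l4}" "l2 \<noteq> l3" "l3 \<noteq> l4" "l2 \<noteq> l4"
      by (auto simp: card_3_iff)
    have Qe: "Q = {l1,l2,l3,l4}" using Q1 Q2 by simp
    have dist: "l1 \<noteq> l2" "l1 \<noteq> l3" "l1 \<noteq> l4" using Q1 Q2 by auto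
    obtain x where x: "x \<in> UV" "x \<in> V" "l1 = {a+x, a-x}" using key Qe by blast
    obtain y where y: "y \<in> UV" "y \<in> V" "l2 = {a+y, a-y}" using key Qe by blast
    obtain z where z: "z \<in> UV" "z \<in> V" "l3 = {a+z, a-z}" using key Qe by blast
    obtain w where w: "w \<in> UV" "w \<in> V" "l4 = {a+w, a-w}" using key Qe by blast
    have inP: "l1 \<in> P" "l2 \<in> P" "l3 \<in> P" "l4 \<in> P" using Q Qe by auto
    have dj: "\<And>l l'. l \<in> P \<Longrightarrow> l' \<in> P \<Longrightarrow> l \<noteq> l' \<Longrightarrow> disjnt l l'"
      using Pdis unfolding pairwise_def by blast
    have d: "dl x y" "dl x z" "dl x w" "dl y z" "dl y w" "dl z w"
      using dl_of_disj dj[OF inP(1) inP(2) dist(1)] dj[OF inP(1) inP(3) dist(2)] dj[OF inP(1) inP(4) dist(3)]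
        dj[OF inP(2) inP(3) Q2(2)] dj[OF inP(2) inP(4) Q2(4)] dj[OF inP(3) inP(4) Q2(3)] x y z w
      by metis+
    have c81: "card (range (\<lambda>(c::3,d::3,e::3,f::3). c *s x + d *s y + e *s z + f *s w)) = 81"
      using card81[OF N goodU'' x(1) y(1) z(1) w(1) d] .
    have "range (\<lambda>(c::3,d::3,e::3,f::3). c *s x + d *s y + e *s z + f *s w) \<subseteq> V"
      using subspace_comb[OF pV(1) x(2) y(2) z(2) w(2)] by auto
    then have "81 \<le> card V" using c81 card_mono[of V] by (metis finite)
    then show False using pV(2) by simp
  qed
qed

lemma partC: assumes P5: "card P = 5"
  shows "is_demicap a D \<longleftrightarrow> (\<forall>Q. Q \<subseteq> P \<and> card Q = 4 \<longrightarrow> \<not> cohyperplanar (\<Union>Q))"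
proof
  assume "is_demicap a D"
  then obtain P' where P': "card P' = 5" "\<forall>l\<in>P'. is_aline a l" "\<Union>P' = D"
    "\<forall>Q. Q \<subseteq> P' \<and> card Q = 4 \<longrightarrow> \<not> cohyperplanar (\<Union>Q)"
    unfolding is_demicap_def by blast
  have "P' \<subseteq> P" using aline_sub[OF P'(2) Pal] P'(3) DP by blast
  moreover have "P \<subseteq> P'" using aline_sub[OF Pal P'(2)] P'(3) DP by blast
  ultimately have "P' = P" by blast
  then show "\<forall>Q. Q \<subseteq> P \<and> card Q = 4 \<longrightarrow> \<not> cohyperplanar (\<Union>Q)" using P'(4) by blast
next
  assume "\<forall>Q. Q \<subseteq> P \<and> card Q = 4 \<longrightarrow> \<not> cohyperplanar (\<Union>Q)"
  then show "is_demicap a D" unfolding is_demicap_def using cap P5 Pal DP by blast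
qed

end



theorem lemma3p4:
  fixes a :: pt and P :: "pt set set" and D :: "pt set"
  assumes "card P = 5"
    and "\<forall>l\<in>P. is_aline a l"
    and "pairwise disjnt P"
    and "D = \<Union>P"
    and "is_cap D"
  shows "is_demicap a D \<longleftrightarrow>
    (\<forall>b. b \<notin> D \<and> b \<noteq> a \<longrightarrow> card {L. is_line L \<and> L \<subseteq> insert b D} \<le> 1)"
proof -
  have A: "(\<forall>b. b \<notin> D \<and> b \<noteq> a \<longrightarrow> card {L. is_line L \<and> L \<subseteq> insert b D} \<le> 1) \<longleftrightarrow> norel {u. a + u \<in> D}"
    using partA[OF assms(2,3,4,5)] .
  have B: "(\<forall>Q. Q \<subseteq> P \<and> card Q = 4 \<longrightarrow> \<not> cohyperplanar (\<Union>Q)) \<longleftrightarrow> norel {u. a + u \<in> D}"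
    using partB[OF assms(2,3,4,5)] .
  have C: "is_demicap a D \<longleftrightarrow> (\<forall>Q. Q \<subseteq> P \<and> card Q = 4 \<longrightarrow> \<not> cohyperplanar (\<Union>Q))"
    using partC[OF assms(2,3,4,5) assms(1)] .
  show ?thesis using A B C by blast
qed

end
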